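(* Let $N\ge2$ and $0=x_0<x_1<\dots<x_N=1$, $I=[0,1]$, $I_i=[x_{i-1},x_i]$, $|I_i|=x_i-x_{i-1}$, and for $i=1,\dots,N$ let $L_i(x)=x_{i-1}+|I_i|x$ (so $L_i(0)=x_{i-1}$, $L_i(1)=x_i$). Let $\alpha_i,\beta_i,\gamma_i$ be reals with $|\alpha_i|<1$, $|\beta_i|+|\gamma_i|<1$, let $p_i\in \mathrm{Lip}\,\lambda_i$ and $q_i\in\mathrm{Lip}\,\mu_i$ with $0<\lambda_i,\mu_i\le1$, and let $f_1,f_2:I\to\mathbb{R}$ be continuous functions satisfying, for all $x\in I$ and $i=1,\dots,N$, $$f_1(L_i(x))=\alpha_if_1(x)+\beta_if_2(x)+p_i(x),\qquad f_2(L_i(x))=\gamma_if_2(x)+q_i(x).$$ For indices $r_1,\dots,r_m\in\{1,\dots,N\}$ let $I_{r_1r_2\dots r_m}=L_{r_m}\circ L_{r_{m-1}}\circ\dots\circ L_{r_1}(I)$ (so $|I_{r_1\dots r_m}|=|I_{r_1}|\cdots|I_{r_m}|$), with the convention that the empty index gives $I$, and set $b_{r_1\dots r_m}=\int_{I_{r_1\dots r_m}}f_1(x)\,dx$, $a_{r_1\dots r_k}=\int_{I_{r_1\dots r_k}}f_2(x)\,dx$ (so $a$ with empty index is $\int_0^1 f_2$). Then $$b_{r_1r_2\dots r_m}=\sum_{k=1}^{m}\Big(\prod_{j=k+1}^{m}|I_{r_j}|\alpha_{r_j}\Big)|I_{r_k}|\Big(\int_{I_{r_1\dots r_{k-1}}}p_{r_k}(\xi)\,d\xi+\beta_{r_k}a_{r_1\dots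 r_{k-1}}\Big)+\prod_{j=1}^{m}\big(|I_{r_j}|\alpha_{r_j}\big)\int_0^1 f_1(\xi)\,d\xi .$$
   Context: $\mathrm{Lip}\,\lambda$ denotes the class of functions $g$ on $I$ with $|g(x)-g(y)|\le C|x-y|^{\lambda}$ for some constant $C$ and all $x,y\in I$. The functions $f_1,f_2$ arise as the components of the continuous function whose graph is the attractor of the IFS $\omega_i(x,y,z)=(L_i(x),\alpha_iy+\beta_iz+p_i(x),\gamma_iz+q_i(x))$ interpolating generalized data $(x_i,y_i,z_i)$; $f_1$ is the coalescence hidden variable fractal interpolation function. *)

theory Defs
  imports "HOL-Analysis.Analysis"
begin

definition ilen :: "(nat \<Rightarrow> real) \<Rightarrow> nat \<Rightarrow> real" where
  "ilen x i = x i - x (i - 1)"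

definition Lmap :: "(nat \<Rightarrow> real) \<Rightarrow> nat \<Rightarrow> real \<Rightarrow> real" where
  "Lmap x i t = x (i - 1) + ilen x i * t"

text \<open>For rs = [r_1,...,r_m], the composition L_(r_m) o ... o L_(r_1)
  (fold applies L_(r_1) first); the empty list gives the identity.\<close>
definition Lcomp :: "(nat \<Rightarrow> real) \<Rightarrow> nat list \<Rightarrow> real \<Rightarrow> real" where
  "Lcomp x rs = fold (Lmap x) rs"

definition Isub :: "(nat \<Rightarrow> real) \<Rightarrow> nat list \<Rightarrow> real set" where
  "Isub x rs = Lcomp x rs ` {0..1}"

definition Lip_on_I :: "real \<Rightarrow> (real \<Rightarrow> real) \<Rightarrow> bool" where
  "Lip_on_I lam g \<longleftrightarrow> (\<exists>C. \<forall>s\<in>{0..1}. \<forall>t\<in>{0..1}. \<bar>g s - g t\<bar> \<le> C * \<bar>s - t\<bar> powr lam)"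

end

theory Submission
  imports Defs
begin

lemma int_aff:
  fixes g :: "real \<Rightarrow> real"
  assumes m: "m > 0" and gi: "g integrable_on {c+m*a..c+m*b}"
  shows "integral {c+m*a..c+m*b} g = m * integral {a..b} (\<lambda>t. g (m*t+c))"
proof -
  have "(g has_integral integral {c+m*a..c+m*b} g) (cbox (c+m*a) (c+m*b))"
    using gi by (simp add: has_integral_integral)
  from has_integral_affinity'[OF this m, of c]
  have "((\<lambda>t. g (m*t+c)) has_integral (integral {c+m*a..c+m*b} g / m)) {a..b}"
    using m by (simp add: field_simps)
  then have "integral {a..b} (\<lambda>t. g (m*t+c)) = integral {c+m*a..c+m*b} g / m"
    by (rule integral_unique)
  then show ?thesis using m by simp
qed

lemma xbounds:
  fixes x :: "nat \<Rightarrow> real"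
  assumes x0: "x 0 = 0" and xN: "x N = 1"
    and xmono: "\<And>i. i < N \<Longrightarrow> x i < x (Suc i)"
  shows "\<And>i j. i < j \<Longrightarrow> j \<le> N \<Longrightarrow> x i < x j"
proof -
  fix i j assume "i < j" "j \<le> N"
  then show "x i < x j"
  proof (induction j rule: less_induct)
    case (less j)
    then obtain k where k: "j = Suc k" by (cases j) auto
    show ?case
    proof (cases "i = k")
      case True then show ?thesis using k less xmono by auto
    next
      case False
      then have "x i < x k" using less k by auto
      also have "x k < x j" using k less xmono by auto
      finally show ?thesis .
    qed
  qed
qed

lemma Lcomp_aff:
  fixes x :: "nat \<Rightarrow> real"
  assumes x0: "x 0 = 0" and xN: "x N = 1"
    and xmono: "\<And>i. i < N \<Longrightarrow> x i < x (Suc i)"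
    and rs: "set rs \<subseteq> {1..N}"
  shows "\<exists>c s. s > 0 \<and> 0 \<le> c \<and> c + s \<le> 1 \<and> (\<forall>t. Lcomp x rs t = c + s * t)"
  using rs
proof (induction rs rule: rev_induct)
  case Nil
  then show ?case by (intro exI[of _ 0] exI[of _ 1]) (simp add: Lcomp_def)
next
  case (snoc r rs)
  then obtain c s where cs: "s > 0" "0 \<le> c" "c + s \<le> 1" "\<forall>t. Lcomp x rs t = c + s * t" by auto
  have r: "1 \<le> r" "r \<le> N" using snoc by auto
  have lt: "x (r-1) < x r" using xmono[of "r-1"] r by simp
  have a: "0 \<le> x (r-1)"
  proof (cases "r - 1 = 0")
    case True then show ?thesis using x0 by simp
  next
    case False
    have "x 0 < x (r-1)" using xbounds[OF x0 xN xmono, of 0 "r-1"] False r by simp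
    then show ?thesis using x0 by simp
  qed
  have b: "x r \<le> 1"
  proof (cases "r = N")
    case True then show ?thesis using xN by simp
  next
    case False then show ?thesis using xbounds[OF x0 xN xmono, of r N] xN r by simp
  qed
  have eq: "Lcomp x (rs @ [r]) t = (x (r-1) + ilen x r * c) + (ilen x r * s) * t" for t
    using cs(4) by (simp add: Lcomp_def Lmap_def algebra_simps)
  have g1: "0 < ilen x r * s" using lt cs by (simp add: ilen_def)
  have g2: "0 \<le> x (r - 1) + ilen x r * c" using lt cs a by (simp add: ilen_def)
  have "ilen x r * (c + s) \<le> ilen x r * 1"
    using cs lt by (intro mult_left_mono) (auto simp: ilen_def)
  then have g3: "x (r - 1) + ilen x r * c + ilen x r * s \<le> 1" using b by (simp add: ilen_def algebra_simps)
  show ?case using g1 g2 g3 eq by blast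
qed

lemma Lip_cont:
  assumes "Lip_on_I lam g" "lam > 0"
  shows "continuous_on {0..1} g"
proof -
  obtain C where C: "\<forall>s\<in>{0..1}. \<forall>t\<in>{0..1}. \<bar>g s - g t\<bar> \<le> C * \<bar>s - t\<bar> powr lam"
    using assms(1) unfolding Lip_on_I_def by blast
  show ?thesis unfolding continuous_on_iff
  proof (intro ballI allI impI)
    fix t e :: real assume t: "t \<in> {0..1}" and e: "0 < e"
    define d where "d = (e / (\<bar>C\<bar> + 1)) powr (1 / lam)"
    have d: "d > 0" using e by (simp add: d_def)
    have dl: "d powr lam = e / (\<bar>C\<bar> + 1)"
      using e assms(2) by (simp add: d_def powr_powr)
    show "\<exists>d>0. \<forall>x'\<in>{0..1}. dist x' t < d \<longrightarrow> dist (g x') (g t) < e"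
    proof (intro exI[of _ d] conjI ballI impI d)
      fix s assume s: "s \<in> {0..1}" and st: "dist s t < d"
      have "\<bar>s - t\<bar> powr lam \<le> d powr lam"
        using st assms(2) by (intro powr_mono2) (auto simp: dist_real_def)
      then have h: "\<bar>s - t\<bar> powr lam \<le> e / (\<bar>C\<bar> + 1)" using dl by simp
      have "\<bar>g s - g t\<bar> \<le> C * \<bar>s - t\<bar> powr lam" using C s t by blast
      also have "\<dots> \<le> \<bar>C\<bar> * \<bar>s - t\<bar> powr lam" by (intro mult_right_mono) auto
      also have "\<dots> \<le> \<bar>C\<bar> * (e / (\<bar>C\<bar> + 1))" using h by (intro mult_left_mono) auto
      also have "\<dots> < e" using e by (simp add: field_simps)
      finally show "dist (g s) (g t) < e" by (simp add: dist_real_def)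
    qed
  qed
qed

lemma Isub_int:
  fixes x :: "nat \<Rightarrow> real"
  assumes x0: "x 0 = 0" and xN: "x N = 1"
    and xmono: "\<And>i. i < N \<Longrightarrow> x i < x (Suc i)"
    and rs: "set rs \<subseteq> {1..N}"
  shows "\<exists>c s. s > 0 \<and> 0 \<le> c \<and> c + s \<le> 1 \<and> Lcomp x rs = (\<lambda>t. c + s * t) \<and> Isub x rs = {c..c+s}"
proof -
  obtain c s where cs: "s > 0" "0 \<le> c" "c + s \<le> 1" "\<forall>t. Lcomp x rs t = c + s * t"
    using Lcomp_aff[OF x0 xN xmono rs] by blast
  have L: "Lcomp x rs = (\<lambda>t. s *\<^sub>R t + c)" using cs(4) by (auto simp: algebra_simps)
  have "Isub x rs = {c..c+s}" unfolding Isub_def L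
    using image_affinity_cbox[of s c 0 1] cs(1) by (simp add: algebra_simps)
  then show ?thesis using cs by (intro exI[of _ c] exI[of _ s]) auto
qed

lemma step_int:
  fixes x :: "nat \<Rightarrow> real" and g :: "real \<Rightarrow> real"
  assumes x0: "x 0 = 0" and xN: "x N = 1"
    and xmono: "\<And>i. i < N \<Longrightarrow> x i < x (Suc i)"
    and rs: "set rs \<subseteq> {1..N}" and r: "r \<in> {1..N}"
    and gc: "continuous_on {0..1} g"
  shows "integral (Isub x (rs @ [r])) g = ilen x r * integral (Isub x rs) (\<lambda>t. g (Lmap x r t))"
proof -
  obtain c s where cs: "s > 0" "0 \<le> c" "c + s \<le> 1" "Lcomp x rs = (\<lambda>t. c + s * t)" "Isub x rs = {c..c+s}"
    using Isub_int[OF x0 xN xmono rs] by blast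
  have rs2: "set (rs @ [r]) \<subseteq> {1..N}" using rs r by auto
  obtain c2 s2 where cs2: "s2 > 0" "0 \<le> c2" "c2 + s2 \<le> 1" "Lcomp x (rs@[r]) = (\<lambda>t. c2 + s2 * t)" "Isub x (rs@[r]) = {c2..c2+s2}"
    using Isub_int[OF x0 xN xmono rs2] by blast
  have r': "1 \<le> r" "r \<le> N" using r by auto
  have lt: "x (r-1) < x r" using xmono[of "r-1"] r' by simp
  have LL: "Lcomp x (rs@[r]) t = x (r-1) + ilen x r * (c + s * t)" for t
    using cs(4) by (simp add: Lcomp_def Lmap_def)
  have "c2 = x (r-1) + ilen x r * c" using LL[of 0] cs2(4) by (metis add_0_right mult_zero_right)
  moreover have "c2 + s2 = x (r-1) + ilen x r * (c + s)" using LL[of 1] cs2(4) by (metis mult_1_right)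
  ultimately have I2: "Isub x (rs@[r]) = {x (r-1) + ilen x r * c .. x (r-1) + ilen x r * (c + s)}"
    using cs2(5) by simp
  have gi: "g integrable_on {x (r-1) + ilen x r * c .. x (r-1) + ilen x r * (c + s)}"
    using I2 cs2 gc by (metis atLeastatMost_subset_iff continuous_on_subset integrable_continuous_real)
  show ?thesis
    unfolding I2 cs(5) using int_aff[of "ilen x r" g "x (r-1)" c "c+s"] gi lt
    by (simp add: ilen_def Lmap_def algebra_simps)
qed

theorem lemma3p1:
  fixes N :: nat and x :: "nat \<Rightarrow> real"
    and \<alpha> \<beta> \<gamma> lam \<mu> :: "nat \<Rightarrow> real"
    and p q :: "nat \<Rightarrow> real \<Rightarrow> real"
    and f1 f2 :: "real \<Rightarrow> real"
    and rs :: "nat list"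
  assumes N2: "N \<ge> 2"
    and x0: "x 0 = 0" and xN: "x N = 1"
    and xmono: "\<And>i. i < N \<Longrightarrow> x i < x (Suc i)"
    and alpha: "\<And>i. i \<in> {1..N} \<Longrightarrow> \<bar>\<alpha> i\<bar> < 1"
    and betagamma: "\<And>i. i \<in> {1..N} \<Longrightarrow> \<bar>\<beta> i\<bar> + \<bar>\<gamma> i\<bar> < 1"
    and lam: "\<And>i. i \<in> {1..N} \<Longrightarrow> 0 < lam i \<and> lam i \<le> 1"
    and mu: "\<And>i. i \<in> {1..N} \<Longrightarrow> 0 < \<mu> i \<and> \<mu> i \<le> 1"
    and pLip: "\<And>i. i \<in> {1..N} \<Longrightarrow> Lip_on_I (lam i) (p i)"
    and qLip: "\<And>i. i \<in> {1..N} \<Longrightarrow> Lip_on_I (\<mu> i) (q i)"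
    and f1c: "continuous_on {0..1} f1"
    and f2c: "continuous_on {0..1} f2"
    and eq1: "\<And>i t. i \<in> {1..N} \<Longrightarrow> t \<in> {0..1} \<Longrightarrow>
               f1 (Lmap x i t) = \<alpha> i * f1 t + \<beta> i * f2 t + p i t"
    and eq2: "\<And>i t. i \<in> {1..N} \<Longrightarrow> t \<in> {0..1} \<Longrightarrow>
               f2 (Lmap x i t) = \<gamma> i * f2 t + q i t"
    and rs: "set rs \<subseteq> {1..N}"
  shows "integral (Isub x rs) f1 =
      (\<Sum>k = 1..length rs.
          (\<Prod>j = k+1..length rs. ilen x (rs ! (j-1)) * \<alpha> (rs ! (j-1)))
          * ilen x (rs ! (k-1))
          * (integral (Isub x (take (k-1) rs)) (p (rs ! (k-1)))
             + \<beta> (rs ! (k-1)) * integral (Isub x (take (k-1) rs)) f2))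
      + (\<Prod>j = 1..length rs. ilen x (rs ! (j-1)) * \<alpha> (rs ! (j-1)))
        * integral {0..1} f1"
proof -
  define T where "T rs k = (\<Prod>j = k+1..length rs. ilen x (rs ! (j-1)) * \<alpha> (rs ! (j-1)))
          * ilen x (rs ! (k-1))
          * (integral (Isub x (take (k-1) rs)) (p (rs ! (k-1)))
             + \<beta> (rs ! (k-1)) * integral (Isub x (take (k-1) rs)) f2)" for rs k
  define Q where "Q rs = (\<Prod>j = 1..length rs. ilen x (rs ! (j-1)) * \<alpha> (rs ! (j-1)))" for rs
  have key: "set rs \<subseteq> {1..N} \<Longrightarrow> integral (Isub x rs) f1 = (\<Sum>k = 1..length rs. T rs k) + Q rs * integral {0..1} f1" for rs
  proof (induction rs rule: rev_induct)
    case Nil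
    then show ?case by (simp add: Q_def Isub_def Lcomp_def)
  next
    case (snoc r rs)
    have rs: "set rs \<subseteq> {1..N}" and r: "r \<in> {1..N}" using snoc.prems by auto
    define m where "m = length rs"
    define J where "J = Isub x rs"
    obtain c s where cs: "s > 0" "0 \<le> c" "c + s \<le> 1" "Isub x rs = {c..c+s}"
      using Isub_int[OF x0 xN xmono rs] by blast
    have sub: "J \<subseteq> {0..1}" using cs J_def by auto
    have pc: "continuous_on {0..1} (p r)" using Lip_cont[OF pLip[OF r]] lam[OF r] by blast
    have i1: "f1 integrable_on J" using sub f1c cs J_def
      by (metis continuous_on_subset integrable_continuous_real)
    have i2: "f2 integrable_on J" using sub f2c cs J_def
      by (metis continuous_on_subset integrable_continuous_real)
    have i3: "p r integrable_on J" using sub pc cs J_def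
      by (metis continuous_on_subset integrable_continuous_real)
    have "integral (Isub x (rs @ [r])) f1 = ilen x r * integral J (\<lambda>t. f1 (Lmap x r t))"
      using step_int[OF x0 xN xmono rs r f1c] J_def by simp
    also have "integral J (\<lambda>t. f1 (Lmap x r t)) = integral J (\<lambda>t. \<alpha> r * f1 t + \<beta> r * f2 t + p r t)"
      using sub eq1[OF r] by (intro integral_cong) auto
    also have "\<dots> = \<alpha> r * integral J f1 + \<beta> r * integral J f2 + integral J (p r)"
    proof (rule integral_unique)
      show "((\<lambda>t. \<alpha> r * f1 t + \<beta> r * f2 t + p r t) has_integral
          \<alpha> r * integral J f1 + \<beta> r * integral J f2 + integral J (p r)) J"
        using i1 i2 i3
        by (intro has_integral_add has_integral_mult_right) (auto simp: has_integral_integral)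
    qed
    finally have b: "integral (Isub x (rs @ [r])) f1 = ilen x r * (\<alpha> r * integral J f1 + \<beta> r * integral J f2 + integral J (p r))" .
    have Tk: "T (rs@[r]) k = ilen x r * \<alpha> r * T rs k" if k: "k \<in> {1..m}" for k
    proof -
      have "(\<Prod>j = k+1..Suc m. ilen x ((rs@[r]) ! (j-1)) * \<alpha> ((rs@[r]) ! (j-1)))
          = ilen x r * \<alpha> r * (\<Prod>j = k+1..m. ilen x (rs ! (j-1)) * \<alpha> (rs ! (j-1)))"
      proof -
        have "(\<Prod>j = k+1..Suc m. ilen x ((rs@[r]) ! (j-1)) * \<alpha> ((rs@[r]) ! (j-1)))
           = ilen x r * \<alpha> r * (\<Prod>j = k+1..m. ilen x ((rs@[r]) ! (j-1)) * \<alpha> ((rs@[r]) ! (j-1)))"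
          using k by (simp add: prod.cl_ivl_Suc nth_append m_def)
        also have "(\<Prod>j = k+1..m. ilen x ((rs@[r]) ! (j-1)) * \<alpha> ((rs@[r]) ! (j-1)))
            = (\<Prod>j = k+1..m. ilen x (rs ! (j-1)) * \<alpha> (rs ! (j-1)))"
          by (intro prod.cong) (auto simp: nth_append m_def)
        finally show ?thesis .
      qed
      note P1 = this
      have N1: "(rs@[r]) ! (k-1) = rs ! (k-1)" using k by (auto simp: nth_append m_def)
      have N2: "take (k-1) (rs@[r]) = take (k-1) rs" using k by (auto simp: m_def)
      have "T (rs@[r]) k = (\<Prod>j = k+1..Suc m. ilen x ((rs@[r]) ! (j-1)) * \<alpha> ((rs@[r]) ! (j-1)))
          * ilen x ((rs@[r]) ! (k-1))
          * (integral (Isub x (take (k-1) (rs@[r]))) (p ((rs@[r]) ! (k-1)))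
             + \<beta> ((rs@[r]) ! (k-1)) * integral (Isub x (take (k-1) (rs@[r]))) f2)"
        unfolding T_def m_def by simp
      also have "\<dots> = ilen x r * \<alpha> r * (\<Prod>j = k+1..m. ilen x (rs ! (j-1)) * \<alpha> (rs ! (j-1)))
          * ilen x (rs ! (k-1))
          * (integral (Isub x (take (k-1) rs)) (p (rs ! (k-1)))
             + \<beta> (rs ! (k-1)) * integral (Isub x (take (k-1) rs)) f2)"
        by (simp only: P1 N1 N2)
      also have "\<dots> = ilen x r * \<alpha> r * T rs k" unfolding T_def m_def by (simp add: mult_ac)
      finally show ?thesis .
    qed
    have Tlast: "T (rs@[r]) (Suc m) = ilen x r * (integral J (p r) + \<beta> r * integral J f2)"
      unfolding T_def J_def by (simp add: m_def)
    have Qs: "Q (rs@[r]) = ilen x r * \<alpha> r * Q rs"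
    proof -
      have "Q (rs@[r]) = ilen x r * \<alpha> r * (\<Prod>j = 1..m. ilen x ((rs@[r]) ! (j-1)) * \<alpha> ((rs@[r]) ! (j-1)))"
        unfolding Q_def by (simp add: prod.cl_ivl_Suc nth_append m_def)
      also have "(\<Prod>j = 1..m. ilen x ((rs@[r]) ! (j-1)) * \<alpha> ((rs@[r]) ! (j-1))) = Q rs"
        unfolding Q_def by (intro prod.cong) (auto simp: nth_append m_def)
      finally show ?thesis .
    qed
    have "(\<Sum>k = 1..length (rs@[r]). T (rs@[r]) k) = (\<Sum>k = 1..m. T (rs@[r]) k) + T (rs@[r]) (Suc m)"
      by (simp add: sum.cl_ivl_Suc m_def)
    also have "(\<Sum>k = 1..m. T (rs@[r]) k) = ilen x r * \<alpha> r * (\<Sum>k = 1..m. T rs k)"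
      by (simp add: Tk sum_distrib_left)
    finally have S: "(\<Sum>k = 1..length (rs@[r]). T (rs@[r]) k) = ilen x r * \<alpha> r * (\<Sum>k = 1..m. T rs k) + T (rs@[r]) (Suc m)" .
    have IH: "integral J f1 = (\<Sum>k = 1..m. T rs k) + Q rs * integral {0..1} f1"
      using snoc.IH rs J_def m_def by simp
    show ?case unfolding b S Tlast Qs IH by (simp add: algebra_simps)
  qed
  show ?thesis using key[OF rs] unfolding T_def Q_def by simp
qed

end
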